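(* Let $\mathcal{S}=\langle\mathcal{L},\vdash\rangle$ be a logic whose signature contains a unary operator $\neg$, and let $\varrho\subseteq\mathcal{P}(\mathcal{L})\times\mathcal{L}$ have finite reach. Then there exist $\alpha,\beta\in\mathcal{L}$ with $\{\alpha,\neg\alpha\}\not\vdash^\varrho\beta$, and there exist $\alpha,\beta\in\mathcal{L}$ with $\{\alpha,\neg\alpha\}\not\vdash^{p\varrho}\beta$; i.e., both companions are paraconsistent with respect to $\neg$.
   Context: A logic is a pair $\langle\mathcal{L},\vdash\rangle$ where $\mathcal{L}$ is the formula algebra over a nonempty set of variables $V$ of some finite signature and $\vdash\subseteq\mathcal{P}(\mathcal{L})\times\mathcal{L}$ is arbitrary. For $\varrho\subseteq\mathcal{P}(\mathcal{L})\times\mathcal{L}$: $\Gamma\vdash^\varrho\alpha$ iff there is $\Delta\subseteq\Gamma$ with $(\Delta,\alpha)\in\varrho$ and $\Delta\vdash\alpha$; $\Gamma\vdash^{p\varrho}\alpha$ iff there is a nonempty $\Delta\subseteq\Gamma$ with $(\Delta,\alpha)\in\varrho$ and $\Delta\vdash\alpha$. A relation $\varrho\subseteq\mathcal{P}(\mathcal{L})\times\mathcal{L}$ has finite reach if for every $\Delta\subseteq\mathcal{L}$ the set $\{\alpha\mid(\Delta,\alpha)\in\varrho\}$ is finite. *)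

theory Defs
  imports Main
begin

text \<open>Formulas over variables of type 'v and connectives of type 'c
  (a finite signature is modelled by a finite type 'c together with an arity map).\<close>
datatype ('v, 'c) form = Var 'v | Op 'c "('v, 'c) form list"

fun wf_form :: "('c \<Rightarrow> nat) \<Rightarrow> ('v, 'c) form \<Rightarrow> bool" where
  "wf_form ar (Var v) = True"
| "wf_form ar (Op c as) = (length as = ar c \<and> (\<forall>a\<in>set as. wf_form ar a))"

definition formulas :: "('c \<Rightarrow> nat) \<Rightarrow> ('v, 'c) form set" where
  "formulas ar = {\<phi>. wf_form ar \<phi>}"

definition derives_rho ::
  "('f set \<Rightarrow> 'f \<Rightarrow> bool) \<Rightarrow> ('f set \<times> 'f) set \<Rightarrow> 'f set \<Rightarrow> 'f \<Rightarrow> bool" where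
  "derives_rho der \<rho> \<Gamma> \<alpha> = (\<exists>\<Delta>. \<Delta> \<subseteq> \<Gamma> \<and> (\<Delta>, \<alpha>) \<in> \<rho> \<and> der \<Delta> \<alpha>)"

definition derives_prho ::
  "('f set \<Rightarrow> 'f \<Rightarrow> bool) \<Rightarrow> ('f set \<times> 'f) set \<Rightarrow> 'f set \<Rightarrow> 'f \<Rightarrow> bool" where
  "derives_prho der \<rho> \<Gamma> \<alpha> = (\<exists>\<Delta>. \<Delta> \<noteq> {} \<and> \<Delta> \<subseteq> \<Gamma> \<and> (\<Delta>, \<alpha>) \<in> \<rho> \<and> der \<Delta> \<alpha>)"

definition finite_reach :: "('f set \<times> 'f) set \<Rightarrow> bool" where
  "finite_reach \<rho> = (\<forall>\<Delta>. finite {\<alpha>. (\<Delta>, \<alpha>) \<in> \<rho>})"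

end

theory Submission
  imports Defs
begin

primrec itn :: "'c \<Rightarrow> 'v \<Rightarrow> nat \<Rightarrow> ('v, 'c) form" where
  "itn c x 0 = Var x"
| "itn c x (Suc n) = Op c [itn c x n]"

lemma itn_inj: "inj (itn c x)"
proof -
  have "\<forall>m. itn c x n = itn c x m \<longrightarrow> n = m" for n
  proof (induction n)
    case 0 show ?case by (intro allI, case_tac m) auto
  next
    case (Suc n) then show ?case by (intro allI, case_tac m) auto
  qed
  then show ?thesis by (simp add: inj_def)
qed

lemma itn_wf: "ar c = 1 \<Longrightarrow> itn c x n \<in> formulas ar"
  by (induction n) (auto simp: formulas_def)

theorem corollary3p16:
  fixes ar :: "'c::finite \<Rightarrow> nat"
    and neg :: 'c
    and der :: "('v, 'c) form set \<Rightarrow> ('v, 'c) form \<Rightarrow> bool"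
    and \<rho> :: "(('v, 'c) form set \<times> ('v, 'c) form) set"
  assumes neg_unary: "ar neg = 1"
    and der_dom: "\<forall>\<Gamma> \<alpha>. der \<Gamma> \<alpha> \<longrightarrow> \<Gamma> \<subseteq> formulas ar \<and> \<alpha> \<in> formulas ar"
    and rho_dom: "\<rho> \<subseteq> Pow (formulas ar) \<times> formulas ar"
    and reach: "finite_reach \<rho>"
  shows "(\<exists>\<alpha>\<in>formulas ar. \<exists>\<beta>\<in>formulas ar.
            \<not> derives_rho der \<rho> {\<alpha>, Op neg [\<alpha>]} \<beta>)
       \<and> (\<exists>\<alpha>\<in>formulas ar. \<exists>\<beta>\<in>formulas ar.
            \<not> derives_prho der \<rho> {\<alpha>, Op neg [\<alpha>]} \<beta>)"
proof -
  obtain x :: 'v where True by simp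
  define a where "a = (Var x :: ('v,'c) form)"
  have aF: "a \<in> formulas ar" by (simp add: a_def formulas_def)
  define S where "S = (\<Union>D\<in>Pow {a, Op neg [a]}. {b. (D, b) \<in> \<rho>})"
  have fS: "finite S" unfolding S_def
    by (rule finite_UN_I) (simp, use reach in \<open>simp add: finite_reach_def\<close>)
  have inf: "infinite (range (itn neg x))"
    using itn_inj[of neg x] finite_imageD[of "itn neg x" UNIV] infinite_UNIV_nat by blast
  have "\<not> range (itn neg x) \<subseteq> S" using inf fS finite_subset by blast
  then obtain b where b: "b \<in> range (itn neg x)" "b \<notin> S" by blast
  have bF: "b \<in> formulas ar" using b(1) itn_wf[of ar neg, OF neg_unary] by (auto simp del: itn.simps)
  have n1: "\<not> derives_rho der \<rho> {a, Op neg [a]} b"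
    using b(2) unfolding derives_rho_def S_def by (auto simp del: insert_subset)
  have n2: "\<not> derives_prho der \<rho> {a, Op neg [a]} b"
    using n1 unfolding derives_rho_def derives_prho_def by blast
  show ?thesis using n1 n2 aF bF by blast
qed

end
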